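(* Let $\Theta=\begin{pmatrix} a&c\\ b&d\end{pmatrix}\in GL(2,\mathbb{Z})$ have no eigenvalue of absolute value $1$, with $\det\Theta=1$. Let $\Delta_1=\det(\Theta-I_2)$. Let $M$ be the mapping torus of the self-homeomorphism of $T^2$ induced by $\Theta$, with $\pi=\pi_1(M)\cong\langle t,x,y\mid txt^{-1}=x^ay^b,\ tyt^{-1}=x^cy^d,\ xy=yx\rangle$, and let $\rho:\pi\to\mathbb{Z}/2\mathbb{Z}$ be the epimorphism with $\rho(t)=1$, $\rho(x)=\rho(y)=0$. If $\Delta_1\equiv 4\pmod 8$ and $\Theta\equiv -I_2\pmod 4$, then $BU(M,\phi)=2$ for every epimorphism $\phi:\pi\to\mathbb{Z}/2\mathbb{Z}$ with $\phi\neq\rho$.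
   Context: For a closed manifold $N$ and an epimorphism $\phi:\pi_1(N)\to\mathbb{Z}/2\mathbb{Z}$, let $N_\phi$ be the associated double cover with covering involution $t_\phi$. The Borsuk–Ulam index $BU(N,\phi)$ is the largest $k$ such that for every continuous map $f:N_\phi\to\mathbb{R}^k$ there is $x\in N_\phi$ with $f(x)=f(t_\phi(x))$. *)

theory Defs
  imports "HOL-Analysis.Analysis" "HOL-Algebra.Elementary_Groups" "HOL-Number_Theory.Cong"
begin

text \<open>The matrix Theta = [[a,c],[b,d]] acting on column vectors (u,v),
 i.e. Theta e1 = (a,b), Theta e2 = (c,d); and the adjugate (its inverse when det = 1).\<close>

definition thmap :: "int \<Rightarrow> int \<Rightarrow> int \<Rightarrow> int \<Rightarrow> 'r::comm_ring_1 \<times> 'r \<Rightarrow> 'r \<times> 'r" where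
  "thmap a b c d p = (of_int a * fst p + of_int c * snd p, of_int b * fst p + of_int d * snd p)"

definition thinv :: "int \<Rightarrow> int \<Rightarrow> int \<Rightarrow> int \<Rightarrow> 'r::comm_ring_1 \<times> 'r \<Rightarrow> 'r \<times> 'r" where
  "thinv a b c d p = (of_int d * fst p - of_int c * snd p, - of_int b * fst p + of_int a * snd p)"

definition thpow :: "int \<Rightarrow> int \<Rightarrow> int \<Rightarrow> int \<Rightarrow> int \<Rightarrow> 'r::comm_ring_1 \<times> 'r \<Rightarrow> 'r \<times> 'r" where
  "thpow a b c d n = (if 0 \<le> n then thmap a b c d ^^ nat n else thinv a b c d ^^ nat (- n))"

text \<open>pi = Z^2 \<rtimes>_Theta Z; the element ((m1,m2),n) stands for x^m1 y^m2 t^n.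
 Thus x = ((1,0),0), y = ((0,1),0), t = ((0,0),1), and t x t^-1 = x^a y^b, t y t^-1 = x^c y^d.\<close>
definition pi_grp :: "int \<Rightarrow> int \<Rightarrow> int \<Rightarrow> int \<Rightarrow> ((int \<times> int) \<times> int) monoid" where
  "pi_grp a b c d = \<lparr> carrier = UNIV,
     mult = (\<lambda>g h. (fst g + thpow a b c d (snd g) (fst h), snd g + snd h)),
     one = ((0, 0), 0) \<rparr>"

text \<open>Deck action of pi on the universal cover R^2 x R of the mapping torus M:
 ((m,n)) acts by (v,s) |-> (Theta^n v + m, s + n).  M = (R^2 x R)/pi.\<close>
definition deck_act :: "int \<Rightarrow> int \<Rightarrow> int \<Rightarrow> int \<Rightarrow> (int \<times> int) \<times> int
     \<Rightarrow> (real \<times> real) \<times> real \<Rightarrow> (real \<times> real) \<times> real" where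
  "deck_act a b c d g p = (thpow a b c d (snd g) (fst p) + (of_int (fst (fst g)), of_int (snd (fst g))),
                           snd p + of_int (snd g))"

abbreviation Z2 :: "int monoid" where "Z2 \<equiv> integer_mod_group 2"

definition quotient_top :: "'a topology \<Rightarrow> ('a \<Rightarrow> 'b) \<Rightarrow> 'b topology" where
  "quotient_top X q = topology (\<lambda>U. U \<subseteq> q ` topspace X \<and> openin X {x \<in> topspace X. q x \<in> U})"

text \<open>Double cover N_phi = (R^2 x R)/ker phi: points are ker phi - orbits.\<close>
definition cover_proj :: "int \<Rightarrow> int \<Rightarrow> int \<Rightarrow> int \<Rightarrow> ((int \<times> int) \<times> int \<Rightarrow> int)
     \<Rightarrow> (real \<times> real) \<times> real \<Rightarrow> ((real \<times> real) \<times> real) set" where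
  "cover_proj a b c d \<phi> p = {deck_act a b c d g p | g. \<phi> g = 0}"

definition double_cover :: "int \<Rightarrow> int \<Rightarrow> int \<Rightarrow> int \<Rightarrow> ((int \<times> int) \<times> int \<Rightarrow> int)
     \<Rightarrow> ((real \<times> real) \<times> real) set topology" where
  "double_cover a b c d \<phi> = quotient_top euclidean (cover_proj a b c d \<phi>)"

definition cover_invol :: "int \<Rightarrow> int \<Rightarrow> int \<Rightarrow> int \<Rightarrow> ((int \<times> int) \<times> int \<Rightarrow> int)
     \<Rightarrow> ((real \<times> real) \<times> real) set \<Rightarrow> ((real \<times> real) \<times> real) set" where
  "cover_invol a b c d \<phi> Orb = {deck_act a b c d g p | g p. \<phi> g = 1 \<and> p \<in> Orb}"

definition BU_prop :: "'x topology \<Rightarrow> ('x \<Rightarrow> 'x) \<Rightarrow> nat \<Rightarrow> bool" where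
  "BU_prop X \<tau> k \<longleftrightarrow> (\<forall>f. continuous_map X (Euclidean_space k) f \<longrightarrow>
      (\<exists>x\<in>topspace X. f x = f (\<tau> x)))"

definition BU_index :: "'x topology \<Rightarrow> ('x \<Rightarrow> 'x) \<Rightarrow> nat" where
  "BU_index X \<tau> = (GREATEST k. BU_prop X \<tau> k)"

definition BU_torus :: "int \<Rightarrow> int \<Rightarrow> int \<Rightarrow> int \<Rightarrow> ((int \<times> int) \<times> int \<Rightarrow> int) \<Rightarrow> nat" where
  "BU_torus a b c d \<phi> = BU_index (double_cover a b c d \<phi>) (cover_invol a b c d \<phi>)"

end

theory Submission
  imports Defs
begin


lemma det_r: "a * d - b * c = 1 \<Longrightarrow> (of_int a * of_int d - of_int b * of_int c :: 'r::comm_ring_1) = 1"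
  by (metis of_int_1 of_int_diff of_int_mult)

lemma thmap_thinv:
  assumes "a * d - b * c = 1"
  shows "thmap a b c d (thinv a b c d p) = (p :: 'r::comm_ring_1 \<times> 'r)"
proof -
  obtain x y where p: "p = (x,y)" by (cases p)
  have D: "(of_int a * of_int d - of_int b * of_int c :: 'r) = 1" using det_r[OF assms] .
  have 1: "of_int a * (of_int d * x - of_int c * y) + of_int c * (- (of_int b * x) + of_int a * y)
      = (of_int a * of_int d - of_int b * of_int c) * x" by (simp add: algebra_simps)
  have 2: "of_int b * (of_int d * x - of_int c * y) + of_int d * (- (of_int b * x) + of_int a * y)
      = (of_int a * of_int d - of_int b * of_int c) * (y::'r)" by (simp add: algebra_simps)
  show ?thesis unfolding p thmap_def thinv_def using 1 2 D by simp
qed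

lemma thinv_thmap:
  assumes "a * d - b * c = 1"
  shows "thinv a b c d (thmap a b c d p) = (p :: 'r::comm_ring_1 \<times> 'r)"
proof -
  obtain x y where p: "p = (x,y)" by (cases p)
  have D: "(of_int a * of_int d - of_int b * of_int c :: 'r) = 1" using det_r[OF assms] .
  have 1: "of_int d * (of_int a * x + of_int c * y) - of_int c * (of_int b * x + of_int d * y)
      = (of_int a * of_int d - of_int b * of_int c) * x" by (simp add: algebra_simps)
  have 2: "- (of_int b * (of_int a * x + of_int c * y)) + of_int a * (of_int b * x + of_int d * y)
      = (of_int a * of_int d - of_int b * of_int c) * (y::'r)" by (simp add: algebra_simps)
  show ?thesis unfolding p thmap_def thinv_def using 1 2 D by simp
qed

lemma thpow_0[simp]: "thpow a b c d 0 = id"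
  by (rule ext) (simp add: thpow_def)

lemma thpow_succ:
  assumes "a * d - b * c = 1"
  shows "thpow a b c d (n+1) p = thmap a b c d (thpow a b c d n (p::'r::comm_ring_1 \<times> 'r))"
proof (cases "0 \<le> n")
  case True
  then have "nat (n+1) = Suc (nat n)" by simp
  then show ?thesis using True by (simp add: thpow_def)
next
  case False
  then have e: "nat (-n) = Suc (nat (-(n+1)))" by simp
  let ?q = "(thinv a b c d ^^ nat (-(n+1))) p"
  have "thmap a b c d (thinv a b c d ?q) = ?q" by (rule thmap_thinv[OF assms])
  then show ?thesis using False e
    by (simp add: thpow_def)
qed

lemma thpow_pred:
  assumes "a * d - b * c = 1"
  shows "thpow a b c d (n-1) p = thinv a b c d (thpow a b c d n (p::'r::comm_ring_1 \<times> 'r))"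
proof -
  have "thpow a b c d n p = thmap a b c d (thpow a b c d (n-1) p)"
    using thpow_succ[OF assms, of "n-1" p] by simp
  then show ?thesis using thinv_thmap[OF assms, of "thpow a b c d (n-1) p"] by simp
qed

lemma thpow_add:
  assumes "a * d - b * c = 1"
  shows "thpow a b c d (n+m) p = thpow a b c d n (thpow a b c d m (p::'r::comm_ring_1 \<times> 'r))"
proof (induction n rule: int_induct[where k=0])
  case base then show ?case by simp
next
  case (step1 i)
  have "thpow a b c d (i + 1 + m) p = thpow a b c d ((i + m) + 1) p" by (simp add: algebra_simps)
  also have "\<dots> = thmap a b c d (thpow a b c d (i+m) p)" by (rule thpow_succ[OF assms])
  finally show ?case using step1 unfolding thpow_succ[OF assms] by simp
next
  case (step2 i)
  have "thpow a b c d (i - 1 + m) p = thpow a b c d ((i + m) - 1) p" by (simp add: algebra_simps)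
  also have "\<dots> = thinv a b c d (thpow a b c d (i+m) p)" by (rule thpow_pred[OF assms])
  finally show ?case using step2 unfolding thpow_pred[OF assms] by simp
qed

lemma thpow_lin:
  assumes "a * d - b * c = 1"
  shows "thpow a b c d n (p + q) = thpow a b c d n p + thpow a b c d n (q::'r::comm_ring_1 \<times> 'r)"
proof (induction n rule: int_induct[where k=0])
  case base then show ?case by simp
next
  case (step1 i)
  then show ?case unfolding thpow_succ[OF assms] by (simp add: thmap_def algebra_simps)
next
  case (step2 i)
  then show ?case unfolding thpow_pred[OF assms] by (simp add: thinv_def algebra_simps)
qed

lemma thpow_zero:
  assumes "a * d - b * c = 1"
  shows "thpow a b c d n 0 = (0::'r::comm_ring_1 \<times> 'r)"
  using thpow_lin[OF assms, of n "0::'r\<times>'r" 0] by simp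

lemma thpow_of_int:
  assumes "a * d - b * c = 1"
  shows "thpow a b c d n (of_int (fst m), of_int (snd m)) =
     ((of_int (fst (thpow a b c d n m)), of_int (snd (thpow a b c d n m))) :: 'r::comm_ring_1 \<times> 'r)"
proof (induction n rule: int_induct[where k=0])
  case base then show ?case by simp
next
  case (step1 i)
  then show ?case unfolding thpow_succ[OF assms] by (simp add: thmap_def)
next
  case (step2 i)
  then show ?case unfolding thpow_pred[OF assms] by (simp add: thinv_def)
qed

lemma thpow_parity:
  fixes m :: "int \<times> int"
  assumes "a * d - b * c = 1" "odd a" "even b" "even c" "odd d"
  shows "even (fst (thpow a b c d n m) - fst m) \<and> even (snd (thpow a b c d n m) - snd m)"
proof (induction n rule: int_induct[where k=0])
  case base then show ?case by simp
next
  case (step1 i)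
  obtain x y :: int where xy: "thpow a b c d i m = (x,y)" by (cases "thpow a b c d i m")
  have e1: "a*x + c*y - fst m = (a-1)*x + c*y + (x - fst m)" by (simp add: algebra_simps)
  have e2: "b*x + d*y - snd m = b*x + (d-1)*y + (y - snd m)" by (simp add: algebra_simps)
  show ?case using step1 assms xy unfolding thpow_succ[OF assms(1)] thmap_def
    by (simp add: e1 e2)
next
  case (step2 i)
  obtain x y :: int where xy: "thpow a b c d i m = (x,y)" by (cases "thpow a b c d i m")
  have e1: "d*x - c*y - fst m = (d-1)*x - c*y + (x - fst m)" by (simp add: algebra_simps)
  have e2: "- (b*x) + a*y - snd m = - (b*x) + (a-1)*y + (y - snd m)" by (simp add: algebra_simps)
  show ?case using step2 assms xy unfolding thpow_pred[OF assms(1)] thinv_def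
    by (simp add: e1 e2)
qed


lemma mult_pi: "mult (pi_grp a b c d) g h = (fst g + thpow a b c d (snd g) (fst h), snd g + snd h)"
  by (simp add: pi_grp_def)

lemma thpow_neg:
  assumes "a * d - b * c = 1"
  shows "thpow a b c d n (- p) = - thpow a b c d n (p::'r::comm_ring_1 \<times> 'r)"
proof -
  have "thpow a b c d n (- p) + thpow a b c d n p = 0"
    using thpow_lin[OF assms, of n "-p" p] by (simp add: thpow_zero[OF assms])
  then show ?thesis by (simp add: eq_neg_iff_add_eq_0)
qed

definition ginv :: "int \<Rightarrow> int \<Rightarrow> int \<Rightarrow> int \<Rightarrow> (int \<times> int) \<times> int \<Rightarrow> (int \<times> int) \<times> int" where
  "ginv a b c d g = (- thpow a b c d (- snd g) (fst g), - snd g)"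

lemma mult_ginv:
  assumes "a * d - b * c = 1"
  shows "mult (pi_grp a b c d) g (ginv a b c d g) = ((0,0),0)"
proof -
  have "thpow a b c d (snd g) (- thpow a b c d (- snd g) (fst g)) = - fst g"
    using thpow_add[OF assms, of "snd g" "- snd g" "fst g", symmetric] by (simp add: thpow_neg[OF assms])
  then show ?thesis by (simp add: mult_pi ginv_def zero_prod_def)
qed

lemma deck_one: "deck_act a b c d ((0,0),0) p = p"
  by (cases p) (simp add: deck_act_def zero_prod_def[symmetric])

lemma deck_mult:
  assumes "a * d - b * c = 1"
  shows "deck_act a b c d g (deck_act a b c d h p) = deck_act a b c d (mult (pi_grp a b c d) g h) p"
proof -
  obtain v s where p: "p = (v,s)" by (cases p)
  obtain mg ng where g: "g = (mg, ng)" by (cases g)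
  obtain mh nh where h: "h = (mh, nh)" by (cases h)
  have 1: "thpow a b c d ng (thpow a b c d nh v + (of_int (fst mh), of_int (snd mh)))
     = thpow a b c d (ng + nh) v + ((of_int (fst (thpow a b c d ng mh)), of_int (snd (thpow a b c d ng mh))) :: real \<times> real)"
    by (simp add: thpow_lin[OF assms] thpow_add[OF assms] thpow_of_int[OF assms])
  show ?thesis unfolding p g h deck_act_def mult_pi using 1
    by (simp add: algebra_simps)
qed

lemma deck_ginv:
  assumes "a * d - b * c = 1"
  shows "deck_act a b c d g (deck_act a b c d (ginv a b c d g) p) = p"
  using deck_mult[OF assms] mult_ginv[OF assms] deck_one by metis

lemma hom_phi:
  assumes "\<phi> \<in> hom (pi_grp a b c d) Z2"
  shows "\<phi> (mult (pi_grp a b c d) g h) = (\<phi> g + \<phi> h) mod 2" "0 \<le> \<phi> g" "\<phi> g < 2"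
proof -
  show "\<phi> (mult (pi_grp a b c d) g h) = (\<phi> g + \<phi> h) mod 2"
    using hom_mult[OF assms, of g h] by (simp add: pi_grp_def)
  have "\<phi> g \<in> carrier Z2" using hom_in_carrier[OF assms, of g] by (simp add: pi_grp_def)
  then show "0 \<le> \<phi> g" "\<phi> g < 2" by (auto simp: carrier_integer_mod_group)
qed

lemma phi_formula:
  assumes hom: "\<phi> \<in> hom (pi_grp a b c d) Z2" and det: "a * d - b * c = 1"
  shows "\<phi> g = (fst (fst g) * \<phi> ((1,0),0) + snd (fst g) * \<phi> ((0,1),0) + snd g * \<phi> ((0,0),1)) mod 2"
proof -
  note hm = hom_phi[OF hom]
  have r: "\<phi> x = 0 \<or> \<phi> x = 1" for x using hm(2,3)[of x] by linarith
  have X: "\<phi> ((m,0),0) = (m * \<phi> ((1,0),0)) mod 2" for m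
  proof (induction m rule: int_induct[where k=0])
    case base
    have "\<phi> ((0,0),0) = (\<phi> ((0,0),0) + \<phi> ((0,0),0)) mod 2"
      using hm(1)[of "((0,0),0)" "((0,0),0)"] by (simp add: mult_pi)
    then show ?case using r[of "((0,0),0)"] by auto
  next
    case (step1 i)
    have "\<phi> ((i+1,0),0) = (\<phi> ((i,0),0) + \<phi> ((1,0),0)) mod 2"
      using hm(1)[of "((i,0),0)" "((1,0),0)"] by (simp add: mult_pi)
    then show ?case using step1 r[of "((1,0),0)"] by (auto simp: algebra_simps) presburger+
  next
    case (step2 i)
    have "\<phi> ((i,0),0) = (\<phi> ((i-1,0),0) + \<phi> ((1,0),0)) mod 2"
      using hm(1)[of "((i-1,0),0)" "((1,0),0)"] by (simp add: mult_pi)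
    then show ?case using step2 r[of "((1,0),0)"] r[of "((i-1,0),0)"] by (auto simp: algebra_simps) presburger+
  qed
  have Y: "\<phi> ((0,m),0) = (m * \<phi> ((0,1),0)) mod 2" for m
  proof (induction m rule: int_induct[where k=0])
    case base
    have "\<phi> ((0,0),0) = (\<phi> ((0,0),0) + \<phi> ((0,0),0)) mod 2"
      using hm(1)[of "((0,0),0)" "((0,0),0)"] by (simp add: mult_pi)
    then show ?case using r[of "((0,0),0)"] by auto
  next
    case (step1 i)
    have "\<phi> ((0,i+1),0) = (\<phi> ((0,i),0) + \<phi> ((0,1),0)) mod 2"
      using hm(1)[of "((0,i),0)" "((0,1),0)"] by (simp add: mult_pi)
    then show ?case using step1 r[of "((0,1),0)"] by (auto simp: algebra_simps) presburger+
  next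
    case (step2 i)
    have "\<phi> ((0,i),0) = (\<phi> ((0,i-1),0) + \<phi> ((0,1),0)) mod 2"
      using hm(1)[of "((0,i-1),0)" "((0,1),0)"] by (simp add: mult_pi)
    then show ?case using step2 r[of "((0,1),0)"] r[of "((0,i-1),0)"] by (auto simp: algebra_simps) presburger+
  qed
  have z: "thpow a b c d n (0::int,0::int) = (0,0)" for n
    using thpow_zero[OF det, of n] by (simp add: zero_prod_def)
  have T: "\<phi> ((0,0),m) = (m * \<phi> ((0,0),1)) mod 2" for m
  proof (induction m rule: int_induct[where k=0])
    case base
    have "\<phi> ((0,0),0) = (\<phi> ((0,0),0) + \<phi> ((0,0),0)) mod 2"
      using hm(1)[of "((0,0),0)" "((0,0),0)"] by (simp add: mult_pi)
    then show ?case using r[of "((0,0),0)"] by auto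
  next
    case (step1 i)
    have "\<phi> ((0,0),i+1) = (\<phi> ((0,0),i) + \<phi> ((0,0),1)) mod 2"
      using hm(1)[of "((0,0),i)" "((0,0),1)"] by (simp add: mult_pi z)
    then show ?case using step1 r[of "((0,0),1)"] by (auto simp: algebra_simps) presburger+
  next
    case (step2 i)
    have "\<phi> ((0,0),i) = (\<phi> ((0,0),i-1) + \<phi> ((0,0),1)) mod 2"
      using hm(1)[of "((0,0),i-1)" "((0,0),1)"] by (simp add: mult_pi z)
    then show ?case using step2 r[of "((0,0),1)"] r[of "((0,0),i-1)"] by (auto simp: algebra_simps) presburger+
  qed
  obtain m1 m2 n where g: "g = ((m1,m2),n)" by (metis prod.collapse)
  have "g = mult (pi_grp a b c d) (mult (pi_grp a b c d) ((m1,0),0) ((0,m2),0)) ((0,0),n)"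
    by (simp add: g mult_pi z)
  then have "\<phi> g = ((\<phi> ((m1,0),0) + \<phi> ((0,m2),0)) mod 2 + \<phi> ((0,0),n)) mod 2"
    using hm(1) by metis
  then show ?thesis unfolding X[of m1] Y[of m2] T[of n] g by (simp add: mod_add_eq)
qed



lemma istopology_quotient:
  "istopology (\<lambda>U. U \<subseteq> q ` topspace X \<and> openin X {x \<in> topspace X. q x \<in> U})"
proof -
  have 1: "{x \<in> topspace X. q x \<in> S \<inter> T} = {x \<in> topspace X. q x \<in> S} \<inter> {x \<in> topspace X. q x \<in> T}" for S T
    by auto
  have 2: "{x \<in> topspace X. q x \<in> \<Union>K} = \<Union>((\<lambda>S. {x \<in> topspace X. q x \<in> S}) ` K)" for K
    by auto
  show ?thesis unfolding istopology_def
  proof (rule conjI; intro allI impI)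
    fix S T assume "S \<subseteq> q ` topspace X \<and> openin X {x \<in> topspace X. q x \<in> S}"
      "T \<subseteq> q ` topspace X \<and> openin X {x \<in> topspace X. q x \<in> T}"
    then show "S \<inter> T \<subseteq> q ` topspace X \<and> openin X {x \<in> topspace X. q x \<in> S \<inter> T}"
      unfolding 1 by (auto intro: openin_Int)
  next
    fix K assume "\<forall>S\<in>K. S \<subseteq> q ` topspace X \<and> openin X {x \<in> topspace X. q x \<in> S}"
    then show "\<Union>K \<subseteq> q ` topspace X \<and> openin X {x \<in> topspace X. q x \<in> \<Union>K}"
      unfolding 2 by (auto intro!: openin_Union)
  qed
qed

lemma openin_quotient_top:
  "openin (quotient_top X q) = (\<lambda>U. U \<subseteq> q ` topspace X \<and> openin X {x \<in> topspace X. q x \<in> U})"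
  unfolding quotient_top_def by (rule topology_inverse'[OF istopology_quotient])

lemma topspace_quotient_top: "topspace (quotient_top X q) = q ` topspace X"
proof -
  have "openin (quotient_top X q) (q ` topspace X)"
  proof -
    have "{x \<in> topspace X. q x \<in> q ` topspace X} = topspace X" by auto
    then show ?thesis unfolding openin_quotient_top by simp
  qed
  then have "q ` topspace X \<subseteq> topspace (quotient_top X q)" by (rule openin_subset)
  moreover have "topspace (quotient_top X q) \<subseteq> q ` topspace X"
    unfolding topspace_def openin_quotient_top by auto
  ultimately show ?thesis by blast
qed

lemma quotient_map_quotient_top: "quotient_map X (quotient_top X q) q"
  unfolding quotient_map_def topspace_quotient_top openin_quotient_top by auto

locale bu_ctx =
  fixes a b c d :: int and \<phi> :: "(int \<times> int) \<times> int \<Rightarrow> int"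
  assumes det: "a * d - b * c = 1"
    and hom: "\<phi> \<in> hom (pi_grp a b c d) Z2"
begin

abbreviation "q \<equiv> cover_proj a b c d \<phi>"
abbreviation "\<tau> \<equiv> cover_invol a b c d \<phi>"
abbreviation "act \<equiv> deck_act a b c d"
abbreviation "gm \<equiv> mult (pi_grp a b c d)"

lemma phi_mult: "\<phi> (gm g h) = (\<phi> g + \<phi> h) mod 2" using hom_phi(1)[OF hom] .
lemma phi_01: "\<phi> g = 0 \<or> \<phi> g = 1" using hom_phi(2,3)[OF hom, of g] by linarith

lemma phi_one: "\<phi> ((0,0),0) = 0"
proof -
  have "gm ((0,0),0) ((0,0),0) = ((0,0),0)" by (simp add: mult_pi zero_prod_def[symmetric] thpow_zero[OF det])
  then show ?thesis using phi_mult[of "((0,0),0)" "((0,0),0)"] phi_01[of "((0,0),0)"] by auto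
qed

lemma phi_ginv: "\<phi> (ginv a b c d g) = \<phi> g"
  using phi_mult[of g "ginv a b c d g"] mult_ginv[OF det, of g] phi_one phi_01[of g] phi_01[of "ginv a b c d g"]
  by auto

lemma q_act: assumes "\<phi> g = 0" shows "q (act g p) = q p"
proof -
  have "q (act g p) \<subseteq> q p"
  proof
    fix x assume "x \<in> q (act g p)"
    then obtain k where k: "\<phi> k = 0" "x = act k (act g p)" unfolding cover_proj_def by auto
    then have "x = act (gm k g) p" "\<phi> (gm k g) = 0" using deck_mult[OF det] phi_mult assms by auto
    then show "x \<in> q p" unfolding cover_proj_def by blast
  qed
  moreover have "q p \<subseteq> q (act g p)"
  proof
    fix x assume "x \<in> q p"
    then obtain k where k: "\<phi> k = 0" "x = act k p" unfolding cover_proj_def by auto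
    have "x = act (gm k (ginv a b c d g)) (act g p)"
      using k deck_mult[OF det] deck_ginv[OF det] deck_mult[OF det, of g "ginv a b c d g"]
        mult_ginv[OF det] deck_one by metis
    moreover have "\<phi> (gm k (ginv a b c d g)) = 0" using phi_mult phi_ginv k assms by simp
    ultimately show "x \<in> q (act g p)" unfolding cover_proj_def by blast
  qed
  ultimately show ?thesis by blast
qed

lemma q_self: "p \<in> q p"
proof -
  have "p = act ((0,0),0) p" by (simp add: deck_one)
  then show ?thesis unfolding cover_proj_def using phi_one by blast
qed

lemma tau_q: assumes "\<phi> g = 1" shows "\<tau> (q p) = q (act g p)"
proof -
  have "\<tau> (q p) \<subseteq> q (act g p)"
  proof
    fix x assume "x \<in> \<tau> (q p)"
    then obtain h p' where hp: "\<phi> h = 1" "p' \<in> q p" "x = act h p'" unfolding cover_invol_def by auto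
    then obtain k where k: "\<phi> k = 0" "p' = act k p" unfolding cover_proj_def by auto
    have "x = act (gm (gm h k) (ginv a b c d g)) (act g p)"
      using hp k deck_mult[OF det] deck_ginv[OF det] by metis
    moreover have "\<phi> (gm (gm h k) (ginv a b c d g)) = 0" using phi_mult phi_ginv k hp assms by simp
    ultimately show "x \<in> q (act g p)" unfolding cover_proj_def by blast
  qed
  moreover have "q (act g p) \<subseteq> \<tau> (q p)"
  proof
    fix x assume "x \<in> q (act g p)"
    then obtain k where k: "\<phi> k = 0" "x = act k (act g p)" unfolding cover_proj_def by auto
    then have "x = act (gm k g) p" "\<phi> (gm k g) = 1" using deck_mult[OF det] phi_mult assms by auto
    then show "x \<in> \<tau> (q p)" unfolding cover_invol_def using q_self by blast
  qed
  ultimately show ?thesis by blast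
qed

lemma q_eq_imp: assumes "q p = q p'" obtains k where "\<phi> k = 0" "p' = act k p"
proof -
  have "p' \<in> q p" using q_self[of p'] assms by simp
  then show thesis using that unfolding cover_proj_def by blast
qed

lemma topspace_dc: "topspace (double_cover a b c d \<phi>) = range q"
  unfolding double_cover_def topspace_quotient_top by simp

lemma quotient_dc: "quotient_map euclidean (double_cover a b c d \<phi>) q"
  unfolding double_cover_def by (rule quotient_map_quotient_top)

end


lemma cont_thmap: "continuous_on UNIV (thmap a b c d :: real \<times> real \<Rightarrow> real \<times> real)"
  unfolding thmap_def by (intro continuous_intros)

lemma cont_thinv: "continuous_on UNIV (thinv a b c d :: real \<times> real \<Rightarrow> real \<times> real)"
  unfolding thinv_def by (intro continuous_intros)

lemma cont_funpow: "continuous_on UNIV (f :: 'a::topological_space \<Rightarrow> 'a) \<Longrightarrow> continuous_on UNIV (f ^^ k)"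
proof (induction k)
  case 0 then show ?case by (simp add: id_def)
next
  case (Suc k)
  then show ?case by (simp add: continuous_on_compose2[of UNIV f UNIV "f^^k"])
qed

lemma cont_thpow: "continuous_on UNIV (thpow a b c d n :: real \<times> real \<Rightarrow> real \<times> real)"
  unfolding thpow_def using cont_funpow[OF cont_thmap] cont_funpow[OF cont_thinv] by simp

lemma cont_act: "continuous_on UNIV (deck_act a b c d g)"
proof -
  have "continuous_on UNIV (\<lambda>p::(real\<times>real)\<times>real. thpow a b c d (snd g) (fst p))"
    by (rule continuous_on_compose2[OF cont_thpow]) (auto intro: continuous_intros)
  then show ?thesis unfolding deck_act_def by (intro continuous_intros)
qed

context bu_ctx
begin

lemma act_X: "act ((m1,m2),0) p = p + ((of_int m1, of_int m2), 0)"
  by (cases p) (simp add: deck_act_def)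

lemma translation:
  fixes h :: "(real \<times> real) \<times> real \<Rightarrow> complex"
  assumes hx: "\<And>p. h (act ((1,0),0) p) = h p + NX" and hy: "\<And>p. h (act ((0,1),0) p) = h p + NY"
  shows "h (act ((m1,m2),0) p) = h p + of_int m1 * NX + of_int m2 * NY"
proof -
  have X: "h (act ((m,0),0) p) = h p + of_int m * NX" for m p
  proof (induction m arbitrary: p rule: int_induct[where k=0])
    case base then show ?case by (simp add: deck_one)
  next
    case (step1 i)
    have "act ((i+1,0),0) p = act ((1,0),0) (act ((i,0),0) p)" by (simp add: act_X algebra_simps)
    then show ?case using step1 hx by (simp add: algebra_simps)
  next
    case (step2 i)
    have "act ((i,0),0) p = act ((1,0),0) (act ((i-1,0),0) p)" by (simp add: act_X algebra_simps)
    then show ?case using step2(2)[of p] hx[of "act ((i-1,0),0) p"] by (simp add: algebra_simps)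
  qed
  have Y: "h (act ((0,m),0) p) = h p + of_int m * NY" for m p
  proof (induction m arbitrary: p rule: int_induct[where k=0])
    case base then show ?case by (simp add: deck_one)
  next
    case (step1 i)
    have "act ((0,i+1),0) p = act ((0,1),0) (act ((0,i),0) p)" by (simp add: act_X algebra_simps)
    then show ?case using step1 hy by (simp add: algebra_simps)
  next
    case (step2 i)
    have "act ((0,i),0) p = act ((0,1),0) (act ((0,i-1),0) p)" by (simp add: act_X algebra_simps)
    then show ?case using step2(2)[of p] hy[of "act ((0,i-1),0) p"] by (simp add: algebra_simps)
  qed
  have "act ((m1,m2),0) p = act ((m1,0),0) (act ((0,m2),0) p)" by (simp add: act_X algebra_simps)
  then show ?thesis using X Y by (simp add: algebra_simps)
qed

end


lemma const_pi_int:
  fixes \<delta> :: "'a::real_normed_vector \<Rightarrow> complex"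
  assumes cd: "continuous_on UNIV \<delta>" and e: "\<And>p. exp (2 * \<delta> p) = 1"
  shows "\<exists>N::int. \<forall>p. \<delta> p = \<i> * of_real pi * of_int N"
proof -
  have ex: "\<exists>n::int. \<delta> p = \<i> * of_real pi * of_int n" for p
  proof -
    from e[of p] obtain n :: int where "Re (2 * \<delta> p) = 0" "Im (2 * \<delta> p) = of_int (2 * n) * pi"
      unfolding exp_eq_1 by blast
    then have "\<delta> p = \<i> * of_real pi * of_int n" by (intro complex_eqI) auto
    then show ?thesis by blast
  qed
  then obtain n where n: "\<And>p. \<delta> p = \<i> * of_real pi * of_int (n p)" by metis
  have "\<delta> constant_on UNIV"
  proof (rule continuous_discrete_range_constant)
    show "connected (UNIV :: 'a set)" by (simp add: convex_connected)
    show "continuous_on UNIV \<delta>" by (rule cd)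
    fix x :: 'a
    show "\<exists>e>0. \<forall>y. y \<in> UNIV \<and> \<delta> y \<noteq> \<delta> x \<longrightarrow> e \<le> norm (\<delta> y - \<delta> x)"
    proof (intro exI[of _ pi] conjI allI impI)
      show "0 < pi" by simp
      fix y assume "y \<in> UNIV \<and> \<delta> y \<noteq> \<delta> x"
      then have ne: "n y \<noteq> n x" using n by metis
      define k where "k = n y - n x"
      have "\<delta> y - \<delta> x = \<i> * of_real pi * of_int k" using n unfolding k_def by (simp add: algebra_simps)
      then have "norm (\<delta> y - \<delta> x) = pi * \<bar>of_int k\<bar>" by (simp add: norm_mult)
      moreover have "1 \<le> \<bar>real_of_int k\<bar>" using ne unfolding k_def by linarith
      ultimately show "pi \<le> norm (\<delta> y - \<delta> x)" by (simp add: mult_le_cancel_left1)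
    qed
  qed
  then obtain y where "\<And>p. \<delta> p = y" unfolding constant_on_def by blast
  then show ?thesis using n by metis
qed

context bu_ctx
begin

lemma lower:
  assumes g0: "\<phi> g0 = 1" and Dl: "(a-1)*(d-1) - b*c \<noteq> 0"
    and nr: "\<phi> ((1,0),0) \<noteq> 0 \<or> \<phi> ((0,1),0) \<noteq> 0"
  shows "BU_prop (double_cover a b c d \<phi>) \<tau> 2"
  unfolding BU_prop_def
proof (intro allI impI)
  fix f :: "((real \<times> real) \<times> real) set \<Rightarrow> nat \<Rightarrow> real"
  assume cf: "continuous_map (double_cover a b c d \<phi>) (Euclidean_space 2) f"
  show "\<exists>x\<in>topspace (double_cover a b c d \<phi>). f x = f (\<tau> x)"
  proof (rule ccontr)
    assume "\<not> ?thesis"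
    then have nz: "\<And>p. f (q p) \<noteq> f (\<tau> (q p))" using topspace_dc by auto
    have cF: "continuous_map euclidean (Euclidean_space 2) (f \<circ> q)"
      using continuous_map_compose[OF quotient_imp_continuous_map[OF quotient_dc] cf] .
    then have cF2: "continuous_map euclidean (powertop_real UNIV) (f \<circ> q)"
      and inT: "\<And>p. f (q p) \<in> {x. \<forall>i\<ge>2. x i = 0}"
      unfolding Euclidean_space_def continuous_map_in_subtopology by (auto simp: Pi_iff)
    have comp: "continuous_on UNIV (\<lambda>p. f (q p) i)" for i
      using cF2 unfolding continuous_map_componentwise_UNIV by auto
    define u where "u p = f (q p) 0 - f (q (act g0 p)) 0" for p
    define v where "v p = f (q p) 1 - f (q (act g0 p)) 1" for p
    define D where "D p = complex_of_real (u p) + \<i> * complex_of_real (v p)" for p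
    have cact: "continuous_on UNIV (\<lambda>p. f (q (act g p)) i)" for g i
      by (rule continuous_on_compose2[OF comp cont_act]) auto
    have cD: "continuous_on UNIV D" unfolding D_def u_def v_def
      by (intro continuous_intros comp cact)
    have Dnz: "D p \<noteq> 0" for p
    proof
      assume "D p = 0"
      then have "u p = 0" "v p = 0" unfolding D_def using complex_eq_iff by fastforce+
      then have "f (q p) i = f (q (act g0 p)) i" for i
        using inT[of p] inT[of "act g0 p"] unfolding u_def v_def
        by (cases "i = 0"; cases "i = 1") auto
      then have "f (q p) = f (\<tau> (q p))" using tau_q[OF g0] by auto
      then show False using nz by blast
    qed
    have g0g0: "\<phi> (gm g0 g0) = 0" using phi_mult g0 by simp
    have Dact: "D (act g p) = (if \<phi> g = 0 then D p else - D p)" for g p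
    proof (cases "\<phi> g = 0")
      case True
      have A: "q (act g p) = q p" using q_act[OF True] .
      have "q (act g0 (act g p)) = q (act g0 p)"
        using tau_q[OF g0, of "act g p"] tau_q[OF g0, of p] A by simp
      note A this
      then show ?thesis using True unfolding D_def u_def v_def by simp
    next
      case False
      then have g1: "\<phi> g = 1" using phi_01[of g] by simp
      have A: "q (act g p) = q (act g0 p)" using tau_q[OF g1, of p] tau_q[OF g0, of p] by simp
      have "q (act g0 (act g p)) = \<tau> (q (act g p))" using tau_q[OF g0, of "act g p"] by simp
      also have "\<dots> = \<tau> (q (act g0 p))" using A by simp
      also have "\<dots> = q (act g0 (act g0 p))" using tau_q[OF g0, of "act g0 p"] by simp
      also have "\<dots> = q (act (gm g0 g0) p)" using deck_mult[OF det, of g0 g0 p] by simp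
      also have "\<dots> = q p" using q_act[OF g0g0] by simp
      finally have "q (act g0 (act g p)) = q p" .
      note A this
      moreover have "q (act g p) = q (act g0 p)" by (rule A)
      ultimately show ?thesis using False unfolding D_def u_def v_def by (simp add: algebra_simps)
    qed
    have "\<exists>h. continuous_on UNIV h \<and> (\<forall>p. D p = exp (h p))"
      by (rule continuous_logarithm_on_contractible[OF cD contractible_UNIV]) (use Dnz in auto)
    then obtain h where ch: "continuous_on UNIV h" and eh: "\<And>p. D p = exp (h p)" by blast
    have gen: "\<exists>N::int. \<forall>p. h (act g p) = h p + \<i> * of_real pi * of_int N" for g
    proof -
      have c1: "continuous_on UNIV (\<lambda>p. h (act g p))"
        by (rule continuous_on_compose2[OF ch cont_act]) auto
      have "continuous_on UNIV (\<lambda>p. h (act g p) - h p)"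
        by (rule continuous_on_diff[OF c1 ch])
      moreover have "exp (2 * (h (act g p) - h p)) = 1" for p
      proof -
        have e2: "exp (2 * z) = exp z * exp z" for z :: complex
          by (simp only: mult_2 exp_add)
        have "exp (2 * (h (act g p) - h p)) = (D (act g p) / D p) * (D (act g p) / D p)"
          unfolding e2 exp_diff eh by simp
        also have "\<dots> = 1" using Dact[of g p] Dnz[of p] by (cases "\<phi> g = 0") auto
        finally show ?thesis .
      qed
      ultimately obtain N :: int where "\<forall>p. h (act g p) - h p = \<i> * of_real pi * of_int N"
        using const_pi_int[of "\<lambda>p. h (act g p) - h p"] by blast
      then have "\<forall>p. h (act g p) = h p + \<i> * of_real pi * of_int N"
        by (metis add_diff_cancel_left' diff_add_cancel add.commute)
      then show ?thesis by blast
    qed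
    obtain NX where NX: "\<And>p. h (act ((1,0),0) p) = h p + \<i> * of_real pi * of_int NX" using gen by blast
    obtain NY where NY: "\<And>p. h (act ((0,1),0) p) = h p + \<i> * of_real pi * of_int NY" using gen by blast
    obtain NT where NT: "\<And>p. h (act ((0,0),1) p) = h p + \<i> * of_real pi * of_int NT" using gen by blast
    note tr = translation[of h, OF NX NY]
    have ipi: "\<i> * complex_of_real pi \<noteq> 0" by simp
    have t1: "thpow a b c d 1 (1::int, 0::int) = (a, b)" "thpow a b c d 1 (0::int, 1::int) = (c, d)"
      "thpow a b c d 0 (0::int,0::int) = (0,0)"
      by (simp_all add: thpow_def thmap_def)
    have eqX: "act ((0,0),1) (act ((1,0),0) p) = act ((a,b),0) (act ((0,0),1) p)" for p
      using deck_mult[OF det] t1 by (simp add: mult_pi)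
    have eqY: "act ((0,0),1) (act ((0,1),0) p) = act ((c,d),0) (act ((0,0),1) p)" for p
      using deck_mult[OF det] t1 by (simp add: mult_pi)
    have "h (act ((0,0),1) (act ((1,0),0) p)) = h (act ((a,b),0) (act ((0,0),1) p))" for p
      using eqX by simp
    moreover have "h (act ((0,0),1) (act ((1,0),0) p)) = h p + \<i> * of_real pi * of_int NX + \<i> * of_real pi * of_int NT" for p
      using NT[of "act ((1,0),0) p"] NX[of p] by simp
    moreover have "h (act ((a,b),0) (act ((0,0),1) p)) = h p + \<i> * of_real pi * of_int NT + of_int a * (\<i> * of_real pi * of_int NX) + of_int b * (\<i> * of_real pi * of_int NY)" for p
      using tr[of a b "act ((0,0),1) p"] NT[of p] by simp
    ultimately have "h p + \<i> * of_real pi * of_int NX + \<i> * of_real pi * of_int NT =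
        h p + \<i> * of_real pi * of_int NT + of_int a * (\<i> * of_real pi * of_int NX) + of_int b * (\<i> * of_real pi * of_int NY)" for p
      by metis
    then have "(\<i> * of_real pi) * (of_int (NX - a * NX - b * NY)) = 0"
      by (simp add: algebra_simps)
    then have "complex_of_int (NX - a * NX - b * NY) = 0" using ipi mult_eq_0_iff by blast
    then have "NX - a * NX - b * NY = 0" by (simp only: of_int_eq_0_iff)
    then have e1: "NX = a * NX + b * NY" by simp
    have "h (act ((0,0),1) (act ((0,1),0) p)) = h (act ((c,d),0) (act ((0,0),1) p))" for p
      using eqY by simp
    moreover have "h (act ((0,0),1) (act ((0,1),0) p)) = h p + \<i> * of_real pi * of_int NY + \<i> * of_real pi * of_int NT" for p
      using NT[of "act ((0,1),0) p"] NY[of p] by simp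
    moreover have "h (act ((c,d),0) (act ((0,0),1) p)) = h p + \<i> * of_real pi * of_int NT + of_int c * (\<i> * of_real pi * of_int NX) + of_int d * (\<i> * of_real pi * of_int NY)" for p
      using tr[of c d "act ((0,0),1) p"] NT[of p] by simp
    ultimately have "h p + \<i> * of_real pi * of_int NY + \<i> * of_real pi * of_int NT =
        h p + \<i> * of_real pi * of_int NT + of_int c * (\<i> * of_real pi * of_int NX) + of_int d * (\<i> * of_real pi * of_int NY)" for p
      by metis
    then have "(\<i> * of_real pi) * (of_int (NY - c * NX - d * NY)) = 0"
      by (simp add: algebra_simps)
    then have "complex_of_int (NY - c * NX - d * NY) = 0" using ipi mult_eq_0_iff by blast
    then have "NY - c * NX - d * NY = 0" by (simp only: of_int_eq_0_iff)
    then have e2: "NY = c * NX + d * NY" by simp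
    have "((a-1)*(d-1) - b*c) * NX = (d-1) * ((a-1)*NX + b*NY) - b * (c*NX + (d-1)*NY)"
      by (simp add: algebra_simps)
    also have "\<dots> = 0" using e1 e2 by (simp add: algebra_simps)
    finally have NX0: "NX = 0" using Dl by simp
    have "((a-1)*(d-1) - b*c) * NY = (a-1) * (c*NX + (d-1)*NY) - c * ((a-1)*NX + b*NY)"
      by (simp add: algebra_simps)
    also have "\<dots> = 0" using e1 e2 by (simp add: algebra_simps)
    finally have NY0: "NY = 0" using Dl by simp
    have "D (act ((1,0),0) p) = D p" for p
      unfolding eh NX NX0 by simp
    then have "\<phi> ((1,0),0) = 0"
      using Dact[of "((1,0),0)" undefined] Dnz[of undefined] by (cases "\<phi> ((1,0),0) = 0") auto
    moreover have "D (act ((0,1),0) p) = D p" for p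
      unfolding eh NY NY0 by simp
    then have "\<phi> ((0,1),0) = 0"
      using Dact[of "((0,1),0)" undefined] Dnz[of undefined] by (cases "\<phi> ((0,1),0) = 0") auto
    ultimately show False using nr by simp
  qed
qed

end


definition sg :: "int \<Rightarrow> real" where "sg j = (if even j then 1 else -1)"

lemma sg_add: "sg (i + j) = sg i * sg j" by (simp add: sg_def)
lemma sg_nz: "sg j \<noteq> 0" by (simp add: sg_def)
lemma sg_even: "even (i - j) \<Longrightarrow> sg i = sg j"
  by (simp add: sg_def)
lemma sg_mod: "sg (j mod 2) = sg j" by (simp add: sg_def)

lemma cos_shift: "cos (x + pi * of_int j) = sg j * cos x"
  by (simp add: cos_add sg_def)
lemma sin_shift: "sin (x + pi * of_int j) = sg j * sin x"
  by (simp add: sin_add sg_def)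

definition AA' :: "real \<Rightarrow> real \<Rightarrow> real \<Rightarrow> real \<times> real \<times> real" where
  "AA' L B t = (cos (L - B) * cos B - sin (L - B) * cos (pi * t) * sin B,
                cos (L - B) * sin B + sin (L - B) * cos (pi * t) * cos B,
                sin (L - B) * sin (pi * t))"

lemma sumsq: 
  fixes x y cb sb ct st :: real
  assumes "cb^2 + sb^2 = 1" "ct^2 + st^2 = 1"
  shows "(x * cb - y * ct * sb)^2 + (x * sb + y * ct * cb)^2 + (y * st)^2 = x^2 + y^2"
proof -
  have "(x * cb - y * ct * sb)^2 + (x * sb + y * ct * cb)^2 + (y * st)^2
     = x^2 * (cb^2 + sb^2) + y^2 * (ct^2 * (cb^2 + sb^2) + st^2)"
    by (simp add: power2_eq_square algebra_simps)
  then show ?thesis using assms by simp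
qed

lemma AA'_nz: "AA' L B t \<noteq> 0"
proof
  assume "AA' L B t = 0"
  then have z: "cos (L - B) * cos B - sin (L - B) * cos (pi * t) * sin B = 0"
    "cos (L - B) * sin B + sin (L - B) * cos (pi * t) * cos B = 0"
    "sin (L - B) * sin (pi * t) = 0"
    by (simp_all add: AA'_def zero_prod_def)
  have "(cos (L - B) * cos B - sin (L - B) * cos (pi * t) * sin B)^2 +
        (cos (L - B) * sin B + sin (L - B) * cos (pi * t) * cos B)^2 + (sin (L - B) * sin (pi * t))^2
        = (cos (L - B))^2 + (sin (L - B))^2"
    by (rule sumsq) (simp_all add: add.commute)
  then show False using z by simp
qed

lemma AA'_shift: "AA' (L + pi * of_int j) (B + pi * of_int (2 * i)) t = sg j *\<^sub>R AA' L B t"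
proof -
  have e: "L + pi * of_int j - (B + pi * of_int (2 * i)) = (L - B) + pi * of_int (j - 2 * i)"
    by (simp add: algebra_simps)
  have s: "sg (j - 2 * i) = sg j" by (rule sg_even) simp
  have s2: "sg (2 * i) = 1" by (simp add: sg_def)
  show ?thesis unfolding AA'_def e cos_shift sin_shift s s2 by (simp add: algebra_simps)
qed

lemma AA'_0: "AA' L B 0 = (cos L, sin L, 0)"
proof -
  define u where "u = L - B"
  have L: "L = u + B" by (simp add: u_def)
  show ?thesis unfolding AA'_def L by (simp add: cos_add sin_add algebra_simps)
qed

lemma AA'_1: "AA' L B 1 = (cos (2 * B - L), sin (2 * B - L), 0)"
proof -
  define u where "u = L - B"
  have L: "L = u + B" by (simp add: u_def)
  have e: "2 * B - (u + B) = B - u" by simp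
  show ?thesis unfolding AA'_def L e by (simp add: cos_diff sin_diff algebra_simps)
qed

lemma cont_AA': "continuous_on UNIV (\<lambda>x::'a::t2_space. AA' (L x) (B x) (t x))"
  if "continuous_on UNIV L" "continuous_on UNIV B" "continuous_on UNIV t"
  unfolding AA'_def by (intro continuous_intros continuous_on_cos continuous_on_sin that)

definition clamp :: "real \<Rightarrow> real" where "clamp t = max 0 (min 1 (2 * t - 1/2))"

lemma cont_clamp: "continuous_on UNIV clamp"
  unfolding clamp_def by (intro continuous_intros)



lemma cont_local:
  fixes F :: "'a::t2_space \<Rightarrow> 'b::topological_space"
  assumes "\<And>x. \<exists>S G. open S \<and> x \<in> S \<and> continuous_on S G \<and> (\<forall>y\<in>S. F y = G y)"
  shows "continuous_on UNIV F"
proof -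
  have "isCont F x" for x
  proof -
  obtain S G where S: "open S" "x \<in> S" "continuous_on S G" "\<forall>y\<in>S. F y = G y"
    using assms by blast
  have "continuous_on S F" using S(3,4) continuous_on_cong by force
  then show "isCont F x" using continuous_on_eq_continuous_at[OF S(1)] S(2) by blast
  qed
  then show ?thesis by (simp add: continuous_at_imp_continuous_on)
qed

lemma open_slab: "open {p::(real\<times>real)\<times>real. \<alpha> < snd p \<and> snd p < \<beta>}"
  by (intro open_Collect_conj open_Collect_less continuous_intros)

locale up_ctx = bu_ctx +
  fixes k0 l0 gam p0 q0 :: int
  assumes hp: "k0 * d - l0 * b = - k0 + 4 * p0" "l0 * a - k0 * c = - l0 + 4 * q0"
    and par: "odd a" "even b" "even c" "odd d"
begin

definition LL :: "real \<times> real \<Rightarrow> real" where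
  "LL w = pi * (of_int k0 * fst w + of_int l0 * snd w)"
definition BB :: "real \<times> real \<Rightarrow> real" where
  "BB w = pi * of_int gam / 2 + 2 * pi * (of_int p0 * fst w + of_int q0 * snd w)"
definition AA :: "real \<Rightarrow> real \<times> real \<Rightarrow> real \<times> real \<times> real" where
  "AA t w = AA' (LL w) (BB w) t"

lemma AA_nz: "AA t w \<noteq> 0" unfolding AA_def by (rule AA'_nz)

lemma AA_shift: "AA t (w + (of_int m1, of_int m2)) = sg (k0 * m1 + l0 * m2) *\<^sub>R AA t w"
proof -
  have 1: "LL (w + (of_int m1, of_int m2)) = LL w + pi * of_int (k0 * m1 + l0 * m2)"
    unfolding LL_def by (simp add: algebra_simps)
  have 2: "BB (w + (of_int m1, of_int m2)) = BB w + pi * of_int (2 * (p0 * m1 + q0 * m2))"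
    unfolding BB_def by (simp add: algebra_simps)
  show ?thesis unfolding AA_def 1 2 by (rule AA'_shift)
qed

lemma AA_1: "AA 1 w = sg gam *\<^sub>R AA 0 (thinv a b c d w)"
proof -
  have r1: "real_of_int p0 = (of_int k0 * of_int d - of_int l0 * of_int b + of_int k0) / 4"
    using arg_cong[OF hp(1), of real_of_int] by simp
  have r2: "real_of_int q0 = (of_int l0 * of_int a - of_int k0 * of_int c + of_int l0) / 4"
    using arg_cong[OF hp(2), of real_of_int] by simp
  have e: "2 * BB w - LL w = LL (thinv a b c d w) + pi * of_int gam"
    unfolding BB_def LL_def thinv_def r1 r2 by (simp add: field_simps)
  show ?thesis unfolding AA_def AA'_1 AA'_0 e cos_shift sin_shift by simp
qed

definition FF :: "(real \<times> real) \<times> real \<Rightarrow> real \<times> real \<times> real" where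
  "FF p = sg (gam * \<lfloor>snd p\<rfloor>) *\<^sub>R AA (clamp (snd p - of_int \<lfloor>snd p\<rfloor>)) (thpow a b c d (- \<lfloor>snd p\<rfloor>) (fst p))"

lemma FF_nz: "FF p \<noteq> 0"
  unfolding FF_def using sg_nz AA_nz by simp

lemma FF_act: "FF (act ((m1,m2),j) p) = sg (k0 * m1 + l0 * m2 + gam * j) *\<^sub>R FF p"
proof -
  obtain v s where p: "p = (v,s)" by (cases p)
  define n where "n = \<lfloor>s\<rfloor>"
  obtain m1' m2' where m': "thpow a b c d (- (n + j)) (m1, m2) = (m1', m2')"
    by (cases "thpow a b c d (- (n + j)) (m1, m2)")
  have fl: "\<lfloor>s + of_int j\<rfloor> = n + j" unfolding n_def by simp
  have tv: "thpow a b c d (- (n + j)) (thpow a b c d j v + (of_int m1, of_int m2))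
      = thpow a b c d (- n) v + (of_int m1', of_int m2')"
  proof -
    have "thpow a b c d (- (n + j)) (thpow a b c d j v) = thpow a b c d (- (n + j) + j) v"
      by (rule thpow_add[OF det, symmetric])
    moreover have "thpow a b c d (- (n + j)) ((of_int m1, of_int m2)::real\<times>real) = (of_int m1', of_int m2')"
      using thpow_of_int[OF det, of "- (n + j)" "(m1,m2)"] m' by simp
    ultimately show ?thesis by (simp add: thpow_lin[OF det])
  qed
  have parity: "even (m1' - m1)" "even (m2' - m2)"
    using thpow_parity[OF det par, of "- (n + j)" "(m1,m2)"] m' by simp_all
  have "even ((k0 * m1' + l0 * m2') - (k0 * m1 + l0 * m2))"
  proof -
    have "(k0 * m1' + l0 * m2') - (k0 * m1 + l0 * m2) = k0 * (m1' - m1) + l0 * (m2' - m2)"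
      by (simp add: algebra_simps)
    then show ?thesis using parity by simp
  qed
  then have sgm: "sg (k0 * m1' + l0 * m2') = sg (k0 * m1 + l0 * m2)" by (rule sg_even)
  have act: "act ((m1,m2),j) p = (thpow a b c d j v + (of_int m1, of_int m2), s + of_int j)"
    unfolding p deck_act_def by simp
  have "FF (act ((m1,m2),j) p) = sg (gam * (n + j)) *\<^sub>R AA (clamp (s - of_int n))
          (thpow a b c d (- n) v + (of_int m1', of_int m2'))"
    unfolding act FF_def fst_conv snd_conv fl tv by simp
  also have "\<dots> = (sg (gam * (n + j)) * sg (k0 * m1 + l0 * m2)) *\<^sub>R AA (clamp (s - of_int n)) (thpow a b c d (- n) v)"
    unfolding AA_shift sgm by simp
  also have "\<dots> = sg (k0 * m1 + l0 * m2 + gam * j) *\<^sub>R FF p"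
    unfolding FF_def p fst_conv snd_conv n_def[symmetric]
    by (simp add: distrib_left sg_add algebra_simps)
  finally show ?thesis .
qed

lemma cont_AA_comp:
  assumes "continuous_on UNIV (t :: (real\<times>real)\<times>real \<Rightarrow> real)" "continuous_on UNIV w"
  shows "continuous_on UNIV (\<lambda>p. AA (t p) (w p))"
proof -
  have "continuous_on UNIV (\<lambda>p. fst (w p))" "continuous_on UNIV (\<lambda>p. snd (w p))"
    using assms(2) by (auto intro: continuous_intros)
  then have "continuous_on UNIV (\<lambda>p. LL (w p))" "continuous_on UNIV (\<lambda>p. BB (w p))"
    unfolding LL_def BB_def by (auto intro!: continuous_intros)
  then show ?thesis unfolding AA_def by (rule cont_AA'[OF _ _ assms(1)])
qed

lemma cont_thpow_fst: "continuous_on UNIV (\<lambda>p::(real\<times>real)\<times>real. thpow a b c d n (fst p))"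
  by (rule continuous_on_compose2[OF cont_thpow]) (auto intro: continuous_intros)

lemma FF_cont: "continuous_on UNIV FF"
proof (rule cont_local)
  fix x :: "(real\<times>real)\<times>real"
  define n where "n = \<lfloor>snd x\<rfloor>"
  define G where "G p = sg (gam * n) *\<^sub>R AA (clamp (snd p - of_int n)) (thpow a b c d (- n) (fst p))" for p :: "(real\<times>real)\<times>real"
  define H where "H p = sg (gam * n) *\<^sub>R AA 0 (thpow a b c d (- n) (fst p))" for p :: "(real\<times>real)\<times>real"
  have ccl: "continuous_on UNIV (\<lambda>p::(real\<times>real)\<times>real. clamp (snd p - of_int n))"
    by (rule continuous_on_compose2[OF cont_clamp]) (auto intro!: continuous_on_diff continuous_on_snd continuous_on_const continuous_on_id)
  have cG: "continuous_on UNIV G" unfolding G_def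
    by (intro continuous_on_scaleR continuous_on_const cont_AA_comp[OF ccl cont_thpow_fst])
  have cH: "continuous_on UNIV H" unfolding H_def
    by (intro continuous_on_scaleR continuous_on_const cont_AA_comp[OF _ cont_thpow_fst])
  show "\<exists>S G. open S \<and> x \<in> S \<and> continuous_on S G \<and> (\<forall>y\<in>S. FF y = G y)"
  proof (cases "snd x = of_int n")
    case True
    let ?S = "{p::(real\<times>real)\<times>real. of_int n - 1/4 < snd p \<and> snd p < of_int n + 1/4}"
    have "\<forall>y\<in>?S. FF y = H y"
    proof
      fix y assume y: "y \<in> ?S"
      show "FF y = H y"
      proof (cases "of_int n \<le> snd y")
        case True
        then have "\<lfloor>snd y\<rfloor> = n" using y by (intro floor_unique) auto
        moreover have "clamp (snd y - of_int n) = 0" using y True unfolding clamp_def by auto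
        ultimately show ?thesis unfolding FF_def H_def by simp
      next
        case False
        then have fl: "\<lfloor>snd y\<rfloor> = n - 1" using y by (intro floor_unique) auto
        moreover have "clamp (snd y - of_int (n - 1)) = 1" using y False unfolding clamp_def by auto
        moreover have "thinv a b c d (thpow a b c d (- (n - 1)) (fst y)) = thpow a b c d (- n) (fst y)"
          using thpow_pred[OF det, of "- (n - 1)" "fst y"] by simp
        moreover have "sg (gam * (n - 1)) * sg gam = sg (gam * n)"
          by (simp add: sg_add[symmetric] algebra_simps)
        ultimately show ?thesis unfolding FF_def H_def by (simp add: AA_1)
      qed
    qed
    moreover have "x \<in> ?S" using True by simp
    ultimately show ?thesis
      using open_slab continuous_on_subset[OF cH subset_UNIV] by blast
  next
    case False
    let ?S = "{p::(real\<times>real)\<times>real. of_int n < snd p \<and> snd p < of_int n + 1}"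
    have "\<forall>y\<in>?S. FF y = G y"
    proof
      fix y assume y: "y \<in> ?S"
      then have "\<lfloor>snd y\<rfloor> = n" by (intro floor_unique) auto
      then show "FF y = G y" unfolding FF_def G_def by simp
    qed
    moreover have "x \<in> ?S"
    proof -
      have "of_int n \<le> snd x" "snd x < of_int n + 1" using floor_correct[of "snd x"] unfolding n_def by auto
      then show ?thesis using False by auto
    qed
    ultimately show ?thesis
      using open_slab continuous_on_subset[OF cG subset_UNIV] by blast
  qed
qed

end


context up_ctx
begin

lemma upper:
  assumes g0: "\<phi> g0 = 1"
    and phiF: "\<And>g. \<phi> g = (fst (fst g) * k0 + snd (fst g) * l0 + snd g * gam) mod 2"
    and k3: "3 \<le> k"
  shows "\<not> BU_prop (double_cover a b c d \<phi>) \<tau> k"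
proof
  assume BU: "BU_prop (double_cover a b c d \<phi>) \<tau> k"
  have FFg: "FF (act g p) = sg (\<phi> g) *\<^sub>R FF p" for g p
  proof -
    obtain m1 m2 j where g: "g = ((m1,m2),j)" by (metis prod.collapse)
    have "\<phi> g = (m1 * k0 + m2 * l0 + j * gam) mod 2" using phiF[of g] g by simp
    then have "sg (\<phi> g) = sg (m1 * k0 + m2 * l0 + j * gam)" by (simp add: sg_mod)
    then have "sg (\<phi> g) = sg (k0 * m1 + l0 * m2 + gam * j)" by (simp add: algebra_simps)
    then show ?thesis unfolding g FF_act by simp
  qed
  define Fv where "Fv p = (\<lambda>i::nat. if i = 0 then fst (FF p) else if i = 1 then fst (snd (FF p))
      else if i = 2 then snd (snd (FF p)) else 0)" for p
  define f where "f Orb = Fv (SOME p. q p = Orb)" for Orb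
  have fq: "f (q p) = Fv p" for p
  proof -
    define p' where "p' = (SOME p'. q p' = q p)"
    have "q p' = q p" unfolding p'_def by (rule someI[of _ p]) simp
    then obtain k where k: "\<phi> k = 0" "p = act k p'" by (rule q_eq_imp)
    have "FF p = FF p'" using FFg[of k p'] k by (simp add: sg_def)
    then show ?thesis unfolding f_def p'_def[symmetric] Fv_def by metis
  qed
  have cFF: "continuous_on UNIV (\<lambda>p. fst (FF p))" "continuous_on UNIV (\<lambda>p. fst (snd (FF p)))"
    "continuous_on UNIV (\<lambda>p. snd (snd (FF p)))"
    using FF_cont by (auto intro!: continuous_on_fst continuous_on_snd)
  have Fvk: "Fv = (\<lambda>p i. if i < k then Fv p i else 0)"
    using k3 unfolding Fv_def by (intro ext) auto
  have cFv: "continuous_map euclidean (Euclidean_space k) Fv"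
  proof -
    have "\<forall>i<k. continuous_map euclidean euclideanreal (\<lambda>p. Fv p i)"
    proof (intro allI impI)
      fix i assume "i < k"
      show "continuous_map euclidean euclideanreal (\<lambda>p. Fv p i)"
        unfolding Fv_def continuous_map_iff_continuous2 using cFF
        by (cases "i = 0"; cases "i = 1"; cases "i = 2") auto
    qed
    then show ?thesis
      by (subst Fvk) (rule continuous_map_componentwise_Euclidean_space[THEN iffD2])
  qed
  have "f \<circ> q = Fv" using fq by auto
  then have cf: "continuous_map (double_cover a b c d \<phi>) (Euclidean_space k) f"
    using continuous_compose_quotient_map_eq[OF quotient_dc] cFv by metis
  obtain x where x: "x \<in> topspace (double_cover a b c d \<phi>)" "f x = f (\<tau> x)"
    using BU cf unfolding BU_prop_def by blast
  then obtain p where xp: "x = q p" using topspace_dc by auto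
  have "Fv p = Fv (act g0 p)" using x(2) unfolding xp tau_q[OF g0] fq .
  moreover have "FF (act g0 p) = - FF p" using FFg[of g0 p] g0 by (simp add: sg_def)
  ultimately have E: "Fv p i = Fv (act g0 p) i" and neg: "FF (act g0 p) = - FF p" for i by simp_all
  have "fst (FF p) = - fst (FF p)" using E[of 0] neg unfolding Fv_def by simp
  moreover have "fst (snd (FF p)) = - fst (snd (FF p))" using E[of 1] neg unfolding Fv_def by simp
  moreover have "snd (snd (FF p)) = - snd (snd (FF p))" using E[of 2] neg unfolding Fv_def by simp
  ultimately have "fst (FF p) = 0" "fst (snd (FF p)) = 0" "snd (snd (FF p)) = 0" by linarith+
  then have "FF p = 0" by (simp add: prod_eq_iff)
  then show False using FF_nz by blast
qed

end

theorem mainTheorem4: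
  fixes a b c d :: int and \<phi> :: "(int \<times> int) \<times> int \<Rightarrow> int"
  assumes det1: "a * d - b * c = 1"
    and hyperbolic: "\<And>z::complex. z\<^sup>2 - of_int (a + d) * z + of_int (a * d - b * c) = 0 \<Longrightarrow> cmod z \<noteq> 1"
    and Delta1: "[(a - 1) * (d - 1) - b * c = 4] (mod 8)"
    and congI: "[a = -1] (mod 4)" "[b = 0] (mod 4)" "[c = 0] (mod 4)" "[d = -1] (mod 4)"
    and epi: "\<phi> \<in> epi (pi_grp a b c d) Z2"
    and not_rho: "\<phi> \<noteq> (\<lambda>g. snd g mod 2)"
  shows "BU_torus a b c d \<phi> = 2"
proof -
  have hom: "\<phi> \<in> hom (pi_grp a b c d) Z2" using epi unfolding epi_def by blast
  interpret bu_ctx a b c d \<phi> using det1 hom by unfold_locales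
  have "1 \<in> \<phi> ` carrier (pi_grp a b c d)" using epi unfolding epi_def
    by (simp add: carrier_integer_mod_group)
  then obtain g0 where g0: "\<phi> g0 = 1" by auto
  define k0 where "k0 = \<phi> ((1,0),0)"
  define l0 where "l0 = \<phi> ((0,1),0)"
  define gam where "gam = \<phi> ((0,0),1)"
  have phiF: "\<phi> g = (fst (fst g) * k0 + snd (fst g) * l0 + snd g * gam) mod 2" for g
    unfolding k0_def l0_def gam_def by (rule phi_formula[OF hom det1])
  have nr: "\<phi> ((1,0),0) \<noteq> 0 \<or> \<phi> ((0,1),0) \<noteq> 0"
  proof (rule ccontr)
    assume "\<not> ?thesis"
    then have k00: "k0 = 0" "l0 = 0" unfolding k0_def l0_def by auto
    have "gam \<noteq> 0" using g0 phiF[of g0] k00 by auto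
    then have "gam = 1" using phi_01[of "((0,0),1)"] unfolding gam_def by auto
    then have "\<phi> = (\<lambda>g. snd g mod 2)" using phiF k00 by (intro ext) simp
    then show False using not_rho by blast
  qed
  have Dl: "(a-1)*(d-1) - b*c \<noteq> 0"
  proof
    assume "(a-1)*(d-1) - b*c = 0"
    then show False using Delta1 by (simp add: cong_def)
  qed
  have low: "BU_prop (double_cover a b c d \<phi>) \<tau> 2" by (rule lower[OF g0 Dl nr])
  have am: "a mod 4 = 3" "b mod 4 = 0" "c mod 4 = 0" "d mod 4 = 3"
    using congI by (simp_all add: cong_def)
  have d1: "4 dvd (d + 1)" "4 dvd b" "4 dvd c" "4 dvd (a + 1)" using am by presburger+
  have par: "odd a" "even b" "even c" "odd d" using am by presburger+
  define p0 where "p0 = (k0 * d - l0 * b + k0) div 4"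
  define q0 where "q0 = (l0 * a - k0 * c + l0) div 4"
  have "4 dvd (k0 * d - l0 * b + k0)"
  proof -
    have e: "k0 * d - l0 * b + k0 = k0 * (d + 1) - l0 * b" by (simp add: algebra_simps)
    have "4 dvd k0 * (d + 1) - l0 * b" using d1 by (intro dvd_diff dvd_mult) auto
    then show ?thesis unfolding e .
  qed
  then have hp1: "k0 * d - l0 * b = - k0 + 4 * p0" unfolding p0_def by auto
  have "4 dvd (l0 * a - k0 * c + l0)"
  proof -
    have e: "l0 * a - k0 * c + l0 = l0 * (a + 1) - k0 * c" by (simp add: algebra_simps)
    have "4 dvd l0 * (a + 1) - k0 * c" using d1 by (intro dvd_diff dvd_mult) auto
    then show ?thesis unfolding e .
  qed
  then have hp2: "l0 * a - k0 * c = - l0 + 4 * q0" unfolding q0_def by auto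
  interpret up_ctx a b c d \<phi> k0 l0 gam p0 q0
    by unfold_locales (use hp1 hp2 par in auto)
  have up: "\<not> BU_prop (double_cover a b c d \<phi>) \<tau> k" if "3 \<le> k" for k
    by (rule upper[OF g0 phiF that])
  show ?thesis unfolding BU_torus_def BU_index_def
  proof (rule Greatest_equality)
    show "BU_prop (double_cover a b c d \<phi>) \<tau> 2" by (rule low)
    fix y assume "BU_prop (double_cover a b c d \<phi>) \<tau> y"
    then show "y \<le> 2" using up[of y] by linarith
  qed
qed


end
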